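(* Let $L$ be a $\mathbb{Z}$-colorable link. Then there exist a regular diagram $D$ of $L$ and a $\mathbb{Z}$-coloring $\gamma$ on $D$ such that $\mathrm{Im}(\gamma)=\{0,a_1,a_2,\dots,a_n\}$ for some positive integer $n$ and integers $a_i>0$ $(i=1,\dots,n)$.
   Context: Let $D$ be a regular diagram of a link $L$; an arc of $D$ is a maximal connected piece of the diagram that is unbroken (it passes over crossings and ends at undercrossings). A $\mathbb{Z}$-coloring on $D$ is a map $\gamma:\{\text{arcs of } D\}\to\mathbb{Z}$ such that at each crossing of $D$ with over arc $a$ and under arcs $b,c$ one has $2\gamma(a)=\gamma(b)+\gamma(c)$. The coloring is trivial if it assigns the same color to all arcs. A link is $\mathbb{Z}$-colorable if it has a diagram admitting a non-trivial $\mathbb{Z}$-coloring. *)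

theory Defs
  imports Main
begin

text \<open>Combinatorial data of a regular link diagram: its arcs and its crossings.
  A crossing is recorded as a triple (over arc, under arc, under arc).\<close>
record 'a diagram =
  arcs :: "'a set"
  crossings :: "('a \<times> 'a \<times> 'a) set"

definition regular_diagram :: "'a diagram \<Rightarrow> bool" where
  "regular_diagram D \<longleftrightarrow> finite (arcs D) \<and> arcs D \<noteq> {} \<and> finite (crossings D) \<and>
     (\<forall>(a, b, c) \<in> crossings D. a \<in> arcs D \<and> b \<in> arcs D \<and> c \<in> arcs D)"

definition Z_coloring :: "'a diagram \<Rightarrow> ('a \<Rightarrow> int) \<Rightarrow> bool" where
  "Z_coloring D \<gamma> \<longleftrightarrow> (\<forall>(a, b, c) \<in> crossings D. 2 * \<gamma> a = \<gamma> b + \<gamma> c)"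

definition trivial_coloring :: "'a diagram \<Rightarrow> ('a \<Rightarrow> int) \<Rightarrow> bool" where
  "trivial_coloring D \<gamma> \<longleftrightarrow> (\<forall>x \<in> arcs D. \<forall>y \<in> arcs D. \<gamma> x = \<gamma> y)"

text \<open>The relation "D is a regular diagram of the link L" is a parameter
  (links being e.g. equivalence classes of diagrams modulo Reidemeister moves).\<close>
definition Z_colorable :: "('a diagram \<Rightarrow> 'l \<Rightarrow> bool) \<Rightarrow> 'l \<Rightarrow> bool" where
  "Z_colorable diagram_of L \<longleftrightarrow>
     (\<exists>D. diagram_of D L \<and> regular_diagram D \<and>
          (\<exists>\<gamma>. Z_coloring D \<gamma> \<and> \<not> trivial_coloring D \<gamma>))"

end

theory Submission
  imports Defs
begin

theorem lemma2p1:
  fixes diagram_of :: "'a diagram \<Rightarrow> 'l \<Rightarrow> bool" and L :: 'l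
  assumes "Z_colorable diagram_of L"
  shows "\<exists>D \<gamma>. diagram_of D L \<and> regular_diagram D \<and> Z_coloring D \<gamma> \<and>
           (\<exists>n::nat. n > 0 \<and> (\<exists>a :: nat \<Rightarrow> int. (\<forall>i \<in> {1..n}. a i > 0) \<and>
              \<gamma> ` arcs D = insert 0 (a ` {1..n})))"
proof -
  obtain D g where D: "diagram_of D L" "regular_diagram D" "Z_coloring D g"
    "\<not> trivial_coloring D g"
    using assms unfolding Z_colorable_def by blast
  have fin: "finite (arcs D)" and ne: "arcs D \<noteq> {}" using D(2) unfolding regular_diagram_def by auto
  define m where "m = Min (g ` arcs D)"
  have mle: "\<And>x. x \<in> arcs D \<Longrightarrow> m \<le> g x" unfolding m_def using fin by auto
  have min_in: "m \<in> g ` arcs D" unfolding m_def using fin ne by auto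
  define h where "h = (\<lambda>x. g x - m)"
  have col: "Z_coloring D h" using D(3) unfolding Z_coloring_def h_def by auto
  define S where "S = h ` arcs D - {0}"
  have finS: "finite S" unfolding S_def using fin by auto
  have Spos: "\<And>y. y \<in> S \<Longrightarrow> y > 0" unfolding S_def h_def using mle
    by (fastforce simp: order_le_less)
  have img: "h ` arcs D = insert 0 S" unfolding S_def h_def using min_in by auto
  have Sne: "S \<noteq> {}"
  proof
    assume "S = {}"
    then have "\<forall>x \<in> arcs D. h x = 0" using img by auto
    then have "trivial_coloring D g" unfolding trivial_coloring_def h_def by auto
    then show False using D(4) by blast
  qed
  obtain f where f: "bij_betw f {1..card S} S" using ex_bij_betw_nat_finite_1[OF finS] by blast
  have "card S > 0" using finS Sne by auto
  moreover have "\<forall>i \<in> {1..card S}. f i > 0" using f Spos bij_betwE by blast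
  moreover have "f ` {1..card S} = S" using f bij_betw_imp_surj_on by blast
  ultimately show ?thesis using D(1,2) col img by metis
qed

end
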